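(* Let $\mathfrak g$ be of type $C_n$. For $s\ge1$, $\mathbf A_s=\mathbf A^1_s\sqcup\mathbf A^2_s$ where $$\mathbf A^1_s=\bigl\{\{\beta_{i_k,j_k}\}_{1\le k\le s}:\ i_k,j_k\in I\setminus\{n\},\ i_1<\dots<i_s\le j_s<j_{s-1}<\dots<j_1\bigr\},$$ $$\mathbf A^2_s=\bigl\{\{\alpha_{\ell,n}\}\cup\{\beta_{i_k,j_k}\}_{1\le k\le s-1}:\ \{\beta_{i_k,j_k}\}_{1\le k\le s-1}\in\mathbf A^1_{s-1},\ \ell\in I,\ \ell<i_1\bigr\}$$ (for $s=1$, $\mathbf A^2_1=\{\{\alpha_{\ell,n}\}:\ell\in I\}$). Moreover $\#\mathbf A^1_s=\binom{n-1}{2s}+\binom{n-1}{2s-1}$, $\#\mathbf A^2_s=\binom{n-1}{2s-1}+\binom{n-1}{2s-2}$, and $\sum_{s\ge0}\#\mathbf A_s=2^n$.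
   Context: Simple roots $\alpha_1,\dots,\alpha_n$ of $C_n$ numbered as in Bourbaki ($\alpha_n$ long), $I=\{1,\dots,n\}$. Set $\alpha_{i,j}=\alpha_i+\dots+\alpha_j$ for $i\le j$ and $\beta_{k,\ell}=\alpha_{k,n-1}+\alpha_{\ell,n}$ for $k\le\ell$ in $I\setminus\{n\}$; then $R^+=\{\alpha_{i,j}\}\cup\{\beta_{k,\ell}\}$ and $\theta=\beta_{1,1}$. Partial order: $\lambda\le\mu$ iff $\mu-\lambda$ is a nonnegative integer combination of simple roots. An antichain is a subset of $R^+$ of pairwise incomparable elements; $\Phi(A)=\{\alpha\in R^+:\alpha\ge\beta$ for some $\beta\in A\}$; $A$ is abelian if $\beta_1+\beta_2\notin R$ for all $\beta_1,\beta_2\in\Phi(A)$. $\mathbf A_s$ is the set of abelian antichains with $s$ elements; $\mathbf A_0$ and $\mathbf A^1_0$ consist of the empty antichain. Convention: $\binom{m}{k}=0$ if $k>m$ or $k<0$. *)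

theory Defs
  imports Main
begin

text \<open>A weight in the root lattice is represented by its
coefficient vector w.r.t. the simple roots alpha_1..alpha_n (Bourbaki numbering,
alpha_n long), i.e. a function nat => int (coefficient of alpha_i at index i,
zero outside 1..n).\<close>

type_synonym rootvec = "nat \<Rightarrow> int"

definition alphaC :: "nat \<Rightarrow> nat \<Rightarrow> rootvec" where
  "alphaC i j = (\<lambda>m. if i \<le> m \<and> m \<le> j then 1 else 0)"

definition betaC :: "nat \<Rightarrow> nat \<Rightarrow> nat \<Rightarrow> rootvec" where
  "betaC n k l = (\<lambda>m. alphaC k (n - 1) m + alphaC l n m)"

definition posrootsC :: "nat \<Rightarrow> rootvec set" where
  "posrootsC n = {alphaC i j | i j. 1 \<le> i \<and> i \<le> j \<and> j \<le> n}
     \<union> {betaC n k l | k l. 1 \<le> k \<and> k \<le> l \<and> l \<le> n - 1}"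

definition rootsC :: "nat \<Rightarrow> rootvec set" where
  "rootsC n = posrootsC n \<union> (\<lambda>a. (\<lambda>m. - a m)) ` posrootsC n"

text \<open>lam \<le> mu iff mu - lam is a nonnegative integer combination of simple roots.\<close>
definition rle :: "nat \<Rightarrow> rootvec \<Rightarrow> rootvec \<Rightarrow> bool" where
  "rle n lam mu \<longleftrightarrow> (\<forall>m. m \<in> {1..n} \<longrightarrow> lam m \<le> mu m) \<and> (\<forall>m. m \<notin> {1..n} \<longrightarrow> lam m = mu m)"

definition antichainC :: "nat \<Rightarrow> rootvec set \<Rightarrow> bool" where
  "antichainC n A \<longleftrightarrow> A \<subseteq> posrootsC n \<and>
     (\<forall>a\<in>A. \<forall>b\<in>A. a \<noteq> b \<longrightarrow> \<not> rle n a b)"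

definition PhiC :: "nat \<Rightarrow> rootvec set \<Rightarrow> rootvec set" where
  "PhiC n A = {a \<in> posrootsC n. \<exists>b\<in>A. rle n b a}"

definition abelianC :: "nat \<Rightarrow> rootvec set \<Rightarrow> bool" where
  "abelianC n A \<longleftrightarrow> (\<forall>b1\<in>PhiC n A. \<forall>b2\<in>PhiC n A. (\<lambda>m. b1 m + b2 m) \<notin> rootsC n)"

definition AbC :: "nat \<Rightarrow> nat \<Rightarrow> rootvec set set" where
  "AbC n s = {A. antichainC n A \<and> abelianC n A \<and> card A = s}"

definition admissible :: "nat \<Rightarrow> nat \<Rightarrow> (nat \<Rightarrow> nat) \<Rightarrow> (nat \<Rightarrow> nat) \<Rightarrow> bool" where
  "admissible n s i j \<longleftrightarrow>
     (\<forall>k\<in>{1..s}. 1 \<le> i k \<and> i k \<le> n - 1 \<and> 1 \<le> j k \<and> j k \<le> n - 1) \<and>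
     (\<forall>k\<in>{1..s}. \<forall>k'\<in>{1..s}. k < k' \<longrightarrow> i k < i k' \<and> j k' < j k) \<and>
     (1 \<le> s \<longrightarrow> i s \<le> j s)"

definition A1C :: "nat \<Rightarrow> nat \<Rightarrow> rootvec set set" where
  "A1C n s = {(\<lambda>k. betaC n (i k) (j k)) ` {1..s} | i j. admissible n s i j}"

definition A2C :: "nat \<Rightarrow> nat \<Rightarrow> rootvec set set" where
  "A2C n s = {insert (alphaC l n) ((\<lambda>k. betaC n (i k) (j k)) ` {1..s - 1}) | l i j.
       admissible n (s - 1) i j \<and> 1 \<le> l \<and> l \<le> n \<and> (2 \<le> s \<longrightarrow> l < i 1)}"

end

theory Submission
  imports Defs
begin


definition Qs :: "nat \<Rightarrow> (nat\<times>nat) set" where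
  "Qs N = {(a,b). 1 \<le> a \<and> a \<le> b \<and> b \<le> N}"

definition pac :: "(nat\<times>nat) set \<Rightarrow> bool" where
  "pac S \<longleftrightarrow> (\<forall>p\<in>S. \<forall>q\<in>S. p \<noteq> q \<longrightarrow> \<not>(fst q \<le> fst p \<and> snd q \<le> snd p))"

definition adm :: "nat \<Rightarrow> nat \<Rightarrow> (nat \<Rightarrow> nat) \<Rightarrow> (nat \<Rightarrow> nat) \<Rightarrow> bool" where
  "adm N s i j \<longleftrightarrow>
     (\<forall>k\<in>{1..s}. 1 \<le> i k \<and> i k \<le> N \<and> 1 \<le> j k \<and> j k \<le> N) \<and>
     (\<forall>k\<in>{1..s}. \<forall>k'\<in>{1..s}. k < k' \<longrightarrow> i k < i k' \<and> j k' < j k) \<and>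
     (1 \<le> s \<longrightarrow> i s \<le> j s)"

definition pacs :: "nat \<Rightarrow> nat \<Rightarrow> (nat\<times>nat) set set" where
  "pacs N s = {S. S \<subseteq> Qs N \<and> pac S \<and> card S = s}"

definition Dset :: "(nat\<times>nat) set \<Rightarrow> nat set" where
  "Dset S = fst ` S \<union> snd ` S"

definition Wset :: "nat \<Rightarrow> nat \<Rightarrow> nat set set" where
  "Wset N s = {U. U \<subseteq> {1..N} \<and> (card U + 1) div 2 = s}"

lemma finite_Qs: "finite (Qs N)"
proof -
  have "Qs N \<subseteq> {0..N} \<times> {0..N}" by (auto simp: Qs_def)
  thus ?thesis by (rule finite_subset) auto
qed

lemma adm_le:
  assumes "adm N s i j" "k \<in> {1..s}" shows "i k \<le> j k"
proof (cases "k = s")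
  case True thus ?thesis using assms by (auto simp: adm_def)
next
  case False
  hence "k < s" using assms(2) by auto
  hence "i k < i s" "j s < j k" "i s \<le> j s" using assms by (auto simp: adm_def)
  thus ?thesis by linarith
qed

lemma adm_pacs:
  assumes "adm N s i j"
  shows "(\<lambda>k. (i k, j k)) ` {1..s} \<in> pacs N s"
proof -
  let ?S = "(\<lambda>k. (i k, j k)) ` {1..s}"
  have sub: "?S \<subseteq> Qs N" using assms adm_le[OF assms] by (auto simp: adm_def Qs_def)
  have "pac ?S"
    unfolding pac_def
  proof (intro ballI impI)
    fix p q assume "p \<in> ?S" "q \<in> ?S" "p \<noteq> q"
    then obtain k k' where kk: "k\<in>{1..s}" "k'\<in>{1..s}" "p = (i k, j k)" "q = (i k', j k')" by blast
    with \<open>p \<noteq> q\<close> have "k \<noteq> k'" by auto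
    hence "k < k' \<or> k' < k" by auto
    thus "\<not>(fst q \<le> fst p \<and> snd q \<le> snd p)"
      using assms kk unfolding adm_def by (metis fst_conv snd_conv leD)
  qed
  have "inj_on (\<lambda>k. (i k, j k)) {1..s}"
  proof (rule inj_onI)
    fix k k' assume "k\<in>{1..s}" "k'\<in>{1..s}" "(i k, j k) = (i k', j k')"
    thus "k = k'" using assms unfolding adm_def by (metis linorder_neqE_nat nat_neq_iff prod.inject)
  qed
  hence "card ?S = s" by (simp add: card_image)
  thus ?thesis using sub \<open>pac ?S\<close> by (simp add: pacs_def)
qed

lemma pacs_adm:
  assumes "S \<in> pacs N s"
  shows "\<exists>i j. adm N s i j \<and> S = (\<lambda>k. (i k, j k)) ` {1..s}"
proof -
  have sub: "S \<subseteq> Qs N" and pS: "pac S" and cS: "card S = s" using assms by (auto simp: pacs_def)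
  have fin: "finite S" using sub finite_Qs finite_subset by blast
  have injf: "inj_on fst S"
  proof (rule inj_onI)
    fix p q assume "p \<in> S" "q \<in> S" "fst p = fst q"
    thus "p = q" using pS unfolding pac_def by (metis nat_le_linear)
  qed
  define A where "A = fst ` S"
  have cA: "card A = s" using injf cS by (simp add: A_def card_image)
  have finA: "finite A" using fin by (simp add: A_def)
  define xs where "xs = sorted_list_of_set A"
  have lxs: "length xs = s" using cA by (simp add: xs_def)
  have sxs: "sorted_wrt (<) xs" by (simp add: xs_def)
  have setxs: "set xs = A" using finA by (simp add: xs_def)
  define h where "h a = (SOME b. (a,b) \<in> S)" for a
  have hS: "(a, h a) \<in> S" if "a \<in> A" for a
    using that unfolding A_def h_def by (metis (mono_tags, lifting) image_iff prod.collapse someI)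
  have huniq: "p = (fst p, h (fst p))" if "p \<in> S" for p
  proof -
    have "(fst p, h (fst p)) \<in> S" using hS that by (auto simp: A_def)
    thus ?thesis using injf that by (metis fst_conv inj_onD)
  qed
  define i where "i k = xs ! (k - 1)" for k
  define j where "j k = h (i k)" for k
  have iA: "i k \<in> A" if "k \<in> {1..s}" for k
    using that lxs setxs by (auto simp: i_def)
  have ijS: "(i k, j k) \<in> S" if "k \<in> {1..s}" for k using hS iA that by (simp add: j_def)
  have imono: "i k < i k'" if "k \<in> {1..s}" "k' \<in> {1..s}" "k < k'" for k k'
    using that sorted_wrt_nth_less[OF sxs, of "k-1" "k'-1"] lxs by (auto simp: i_def)
  have Seq: "S = (\<lambda>k. (i k, j k)) ` {1..s}"
  proof
    show "(\<lambda>k. (i k, j k)) ` {1..s} \<subseteq> S" using ijS by auto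
  next
    show "S \<subseteq> (\<lambda>k. (i k, j k)) ` {1..s}"
    proof
      fix p assume "p \<in> S"
      hence "fst p \<in> set xs" using setxs by (auto simp: A_def)
      then obtain t where t: "t < s" "xs ! t = fst p" using lxs by (metis in_set_conv_nth)
      hence "i (Suc t) = fst p" by (simp add: i_def)
      hence "p = (i (Suc t), j (Suc t))" using huniq[OF \<open>p\<in>S\<close>] by (simp add: j_def)
      moreover have "Suc t \<in> {1..s}" using t by auto
      ultimately show "p \<in> (\<lambda>k. (i k, j k)) ` {1..s}" by blast
    qed
  qed
  have "adm N s i j"
    unfolding adm_def
  proof (intro conjI ballI impI)
    fix k assume "k \<in> {1..s}"
    hence "(i k, j k) \<in> Qs N" using ijS sub by auto
    thus "1 \<le> i k" "i k \<le> N" "1 \<le> j k" "j k \<le> N" by (auto simp: Qs_def)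
  next
    fix k k' assume kk: "k \<in> {1..s}" "k' \<in> {1..s}" "k < k'"
    show "i k < i k'" using imono kk by auto
    have "(i k, j k) \<noteq> (i k', j k')" using imono[OF kk] by auto
    hence "\<not> (i k \<le> i k' \<and> j k \<le> j k')" using pS ijS kk unfolding pac_def
      by (metis fst_conv snd_conv)
    thus "j k' < j k" using imono[OF kk] by auto
  next
    assume "1 \<le> s"
    hence "(i s, j s) \<in> Qs N" using ijS sub by auto
    thus "i s \<le> j s" by (auto simp: Qs_def)
  qed
  thus ?thesis using Seq by blast
qed

lemma pacs_iff: "S \<in> pacs N s \<longleftrightarrow> (\<exists>i j. adm N s i j \<and> S = (\<lambda>k. (i k, j k)) ` {1..s})"
  using adm_pacs pacs_adm by blast

lemma adm_enum:
  assumes adm: "adm N s i j"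
  defines "U \<equiv> i ` {1..s} \<union> j ` {1..s}"
  shows "(card U + 1) div 2 = s \<and>
         (\<forall>k\<in>{1..s}. i k = sorted_list_of_set U ! (k - 1) \<and> j k = sorted_list_of_set U ! (card U - k))"
proof -
  have A1: "\<And>k k'. k\<in>{1..s} \<Longrightarrow> k'\<in>{1..s} \<Longrightarrow> k < k' \<Longrightarrow> i k < i k' \<and> j k' < j k"
    using adm by (auto simp: adm_def)
  have A2: "1 \<le> s \<Longrightarrow> i s \<le> j s" using adm by (auto simp: adm_def)
  define L where "L = (if i s = j s then 2*s - 1 else 2*s)"
  define g where "g p = (if p < s then i (p+1) else j (L - p))" for p
  define ys where "ys = map g [0..<L]"
  have gmono: "g p < g q" if pq: "p < q" "q < L" for p q
  proof (cases "q < s")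
    case True
    thus ?thesis using pq A1[of "p+1" "q+1"] by (auto simp: g_def)
  next
    case qs: False
    show ?thesis
    proof (cases "p < s")
      case ps: True
      have le: "i (p+1) \<le> i s" using A1[of "p+1" s] ps by (cases "p+1 = s") auto
      have s1: "1 \<le> s" using ps by auto
      have r: "L - q \<in> {1..s}" using pq qs by (auto simp: L_def split: if_splits)
      have "i (p+1) < j (L - q)"
      proof (cases "L - q = s")
        case True
        hence L2: "L = 2*s" using pq qs by (auto simp: L_def split: if_splits)
        hence "i s < j s" using A2[OF s1] L2 s1 by (auto simp: L_def split: if_splits)
        thus ?thesis using le True by simp
      next
        case False
        hence "L - q < s" using r by auto
        hence "j s < j (L - q)" using A1[of "L-q" s] r s1 by auto
        thus ?thesis using le A2[OF s1] by linarith
      qed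
      thus ?thesis using ps qs by (simp add: g_def)
    next
      case False
      have r1: "L - q \<in> {1..s}" "L - p \<in> {1..s}" "L - q < L - p"
        using pq qs False by (auto simp: L_def split: if_splits)
      thus ?thesis using A1[of "L-q" "L-p"] False qs by (simp add: g_def)
    qed
  qed
  have sys: "sorted_wrt (<) ys"
    unfolding sorted_wrt_iff_nth_less ys_def using gmono by auto
  have setys: "set ys = U"
  proof
    show "set ys \<subseteq> U"
    proof
      fix x assume "x \<in> set ys"
      then obtain p where p: "p < L" "x = g p" by (auto simp: ys_def)
      show "x \<in> U"
      proof (cases "p < s")
        case True thus ?thesis using p by (auto simp: g_def U_def)
      next
        case False
        hence "L - p \<in> {1..s}" using p by (auto simp: L_def split: if_splits)
        thus ?thesis using p False by (auto simp: g_def U_def)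
      qed
    qed
  next
    show "U \<subseteq> set ys"
    proof
      fix x assume "x \<in> U"
      then consider k where "k \<in> {1..s}" "x = i k" | k where "k \<in> {1..s}" "x = j k"
        unfolding U_def by blast
      thus "x \<in> set ys"
      proof cases
        case 1
        hence "k - 1 < L" "g (k-1) = x" by (auto simp: L_def g_def)
        thus ?thesis by (force simp: ys_def)
      next
        case 2
        show ?thesis
        proof (cases "L - k \<ge> s")
          case True
          hence "L - k < L" "g (L - k) = x" using 2 by (auto simp: L_def g_def)
          thus ?thesis by (force simp: ys_def)
        next
          case False
          hence "k = s" "i s = j s" using 2 by (auto simp: L_def split: if_splits)
          hence "s - 1 < L" "g (s-1) = x" using 2 by (auto simp: L_def g_def)
          thus ?thesis by (force simp: ys_def)
        qed
      qed
    qed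
  qed
  have finU: "finite U" by (simp add: U_def)
  have lys: "length ys = L" by (simp add: ys_def)
  have cU: "card U = L"
    using setys sys lys by (metis distinct_card strict_sorted_iff)
  have sl: "sorted_list_of_set U = ys"
    using sorted_list_of_set_unique[OF finU] sys setys lys cU by auto
  have "(card U + 1) div 2 = s" using cU by (auto simp: L_def)
  moreover have "\<forall>k\<in>{1..s}. i k = sorted_list_of_set U ! (k - 1) \<and> j k = sorted_list_of_set U ! (card U - k)"
  proof
    fix k assume k: "k \<in> {1..s}"
    have "i k = ys ! (k - 1)" using k by (auto simp: ys_def g_def L_def nth_append)
    moreover have "j k = ys ! (L - k)"
    proof (cases "L - k \<ge> s")
      case True thus ?thesis using k by (auto simp: ys_def g_def L_def)
    next
      case False
      hence "k = s" "i s = j s" using k by (auto simp: L_def split: if_splits)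
      thus ?thesis using k False by (auto simp: ys_def g_def L_def)
    qed
    ultimately show "i k = sorted_list_of_set U ! (k - 1) \<and> j k = sorted_list_of_set U ! (card U - k)"
      using sl cU by simp
  qed
  ultimately show ?thesis by blast
qed



lemma set_enum:
  assumes U: "U \<subseteq> {1..N}" "(card U + 1) div 2 = s"
  defines "xs \<equiv> sorted_list_of_set U"
  shows "adm N s (\<lambda>k. xs ! (k - 1)) (\<lambda>k. xs ! (card U - k))
     \<and> U = (\<lambda>k. xs ! (k - 1)) ` {1..s} \<union> (\<lambda>k. xs ! (card U - k)) ` {1..s}"
proof -
  have finU: "finite U" using U(1) by (rule finite_subset) simp
  define L where "L = card U"
  have lxs: "length xs = L" by (simp add: xs_def L_def)
  have sxs: "sorted_wrt (<) xs" by (simp add: xs_def)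
  have setxs: "set xs = U" using finU by (simp add: xs_def)
  have Ls: "s \<le> L" "L \<le> 2*s" "2*s \<le> L + 1" using U(2) by (auto simp: L_def)
  have mem: "xs ! p \<in> U" if "p < L" for p using that lxs setxs by (metis nth_mem)
  have less: "xs ! p < xs ! q" if "p < q" "q < L" for p q using sorted_wrt_nth_less[OF sxs] that lxs by auto
  have leq: "xs ! p \<le> xs ! q" if "p \<le> q" "q < L" for p q using less[of p q] that by (cases "p = q") auto
  have "adm N s (\<lambda>k. xs ! (k - 1)) (\<lambda>k. xs ! (card U - k))"
    unfolding adm_def L_def[symmetric]
  proof (intro conjI ballI impI)
    fix k assume k: "k \<in> {1..s}"
    have "k - 1 < L" "L - k < L" using k Ls by auto
    hence "xs ! (k-1) \<in> U" "xs ! (L - k) \<in> U" using mem by auto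
    thus "1 \<le> xs ! (k-1)" "xs ! (k-1) \<le> N" "1 \<le> xs ! (L-k)" "xs ! (L-k) \<le> N" using U(1) by auto
  next
    fix k k' assume kk: "k \<in> {1..s}" "k' \<in> {1..s}" "k < k'"
    show "xs ! (k-1) < xs ! (k'-1)" using kk Ls by (intro less) auto
    show "xs ! (L-k') < xs ! (L-k)" using kk Ls by (intro less) auto
  next
    assume "1 \<le> s"
    thus "xs ! (s-1) \<le> xs ! (L-s)" using Ls by (intro leq) auto
  qed
  moreover have "U = (\<lambda>k. xs ! (k - 1)) ` {1..s} \<union> (\<lambda>k. xs ! (card U - k)) ` {1..s}"
  proof
    show "U \<subseteq> (\<lambda>k. xs ! (k - 1)) ` {1..s} \<union> (\<lambda>k. xs ! (card U - k)) ` {1..s}"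
    proof
      fix x assume "x \<in> U"
      then obtain p where p: "p < L" "xs ! p = x" using setxs lxs by (metis in_set_conv_nth)
      show "x \<in> (\<lambda>k. xs ! (k - 1)) ` {1..s} \<union> (\<lambda>k. xs ! (card U - k)) ` {1..s}"
      proof (cases "p < s")
        case True
        hence "Suc p \<in> {1..s}" "x = xs ! (Suc p - 1)" using p by auto
        thus ?thesis by blast
      next
        case False
        hence "L - p \<in> {1..s}" "x = xs ! (card U - (L - p))" using p Ls by (auto simp: L_def)
        thus ?thesis by blast
      qed
    qed
  next
    show "(\<lambda>k. xs ! (k - 1)) ` {1..s} \<union> (\<lambda>k. xs ! (card U - k)) ` {1..s} \<subseteq> U"
      using mem Ls by (auto simp: L_def)
  qed
  ultimately show ?thesis by blast
qed

lemma Dset_img: "Dset ((\<lambda>k. (i k, j k)) ` A) = i ` A \<union> j ` A"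
  by (auto simp: Dset_def image_image)

lemma Dset_inj: "inj_on Dset (pacs N s)"
proof (rule inj_onI)
  fix S S' assume S: "S \<in> pacs N s" and S': "S' \<in> pacs N s" and eq: "Dset S = Dset S'"
  obtain i j where ij: "adm N s i j" "S = (\<lambda>k. (i k, j k)) ` {1..s}" using pacs_adm[OF S] by blast
  obtain i' j' where ij': "adm N s i' j'" "S' = (\<lambda>k. (i' k, j' k)) ` {1..s}" using pacs_adm[OF S'] by blast
  have U: "i ` {1..s} \<union> j ` {1..s} = i' ` {1..s} \<union> j' ` {1..s}"
    using eq ij ij' by (simp add: Dset_img)
  have e1: "\<forall>k\<in>{1..s}. i k = sorted_list_of_set (i' ` {1..s} \<union> j' ` {1..s}) ! (k - 1) \<and>
       j k = sorted_list_of_set (i' ` {1..s} \<union> j' ` {1..s}) ! (card (i' ` {1..s} \<union> j' ` {1..s}) - k)"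
    using conjunct2[OF adm_enum[OF ij(1)]] unfolding U .
  note e2 = conjunct2[OF adm_enum[OF ij'(1)]]
  have "\<forall>k\<in>{1..s}. i k = i' k \<and> j k = j' k"
  proof
    fix k assume "k \<in> {1..s}"
    thus "i k = i' k \<and> j k = j' k" using bspec[OF e1 \<open>k \<in> {1..s}\<close>] bspec[OF e2 \<open>k \<in> {1..s}\<close>] by simp
  qed
  hence "(\<lambda>k. (i k, j k)) ` {1..s} = (\<lambda>k. (i' k, j' k)) ` {1..s}" by (intro image_cong) auto
  thus "S = S'" using ij ij' by simp
qed

lemma Dset_image: "Dset ` pacs N s = Wset N s"
proof
  show "Dset ` pacs N s \<subseteq> Wset N s"
  proof
    fix U assume "U \<in> Dset ` pacs N s"
    then obtain S where S: "S \<in> pacs N s" "U = Dset S" by blast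
    obtain i j where ij: "adm N s i j" "S = (\<lambda>k. (i k, j k)) ` {1..s}" using pacs_adm[OF S(1)] by blast
    have "U = i ` {1..s} \<union> j ` {1..s}" using S ij by (simp add: Dset_img)
    moreover have "i ` {1..s} \<union> j ` {1..s} \<subseteq> {1..N}" using ij(1) by (auto simp: adm_def)
    moreover have "(card (i ` {1..s} \<union> j ` {1..s}) + 1) div 2 = s" using conjunct1[OF adm_enum[OF ij(1)]] .
    ultimately show "U \<in> Wset N s" unfolding Wset_def by blast
  qed
next
  show "Wset N s \<subseteq> Dset ` pacs N s"
  proof
    fix U assume "U \<in> Wset N s"
    hence U: "U \<subseteq> {1..N}" "(card U + 1) div 2 = s" by (auto simp: Wset_def)
    note e = set_enum[OF U]
    let ?i = "\<lambda>k. sorted_list_of_set U ! (k - 1)" and ?j = "\<lambda>k. sorted_list_of_set U ! (card U - k)"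
    have P1: "(\<lambda>k. (?i k, ?j k)) ` {1..s} \<in> pacs N s" using conjunct1[OF e] by (rule adm_pacs)
    have P2: "Dset ((\<lambda>k. (?i k, ?j k)) ` {1..s}) = U" unfolding Dset_img using conjunct2[OF e] by (rule sym)
    show "U \<in> Dset ` pacs N s" by (rule image_eqI[where f=Dset, OF P2[symmetric] P1])
  qed
qed

lemma card_pacs: "card (pacs N s) = card (Wset N s)"
proof -
  have "card (Dset ` pacs N s) = card (pacs N s)" by (rule card_image[OF Dset_inj])
  thus ?thesis by (simp add: Dset_image)
qed

lemma card_pacs_P: "card {S \<in> pacs N s. P (Dset S)} = card {U \<in> Wset N s. P U}"
proof -
  have i: "inj_on Dset {S \<in> pacs N s. P (Dset S)}" using Dset_inj by (rule inj_on_subset) auto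
  have e: "Dset ` {S \<in> pacs N s. P (Dset S)} = {U \<in> Dset ` pacs N s. P U}" by auto
  have "card (Dset ` {S \<in> pacs N s. P (Dset S)}) = card {S \<in> pacs N s. P (Dset S)}" by (rule card_image[OF i])
  thus ?thesis using e by (simp add: Dset_image)
qed



lemma card_W:
  assumes "1 \<le> s"
  shows "card (Wset N s) = (N choose (2*s)) + (N choose (2*s - 1))"
proof -
  have e: "Wset N s = {U. U \<subseteq> {1..N} \<and> card U = 2*s} \<union> {U. U \<subseteq> {1..N} \<and> card U = 2*s - 1}"
    using assms by (auto simp: Wset_def)
  have d: "{U. U \<subseteq> {1..N} \<and> card U = 2*s} \<inter> {U. U \<subseteq> {1..N} \<and> card U = 2*s - 1} = {}"
    using assms by auto
  have f: "finite {U. U \<subseteq> {1..N} \<and> card U = k}" for k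
    by (rule finite_subset[of _ "Pow {1..N}"]) auto
  show ?thesis unfolding e
    by (subst card_Un_disjoint[OF f f d]) (simp add: n_subsets)
qed

lemma card_W_n:
  assumes "1 \<le> s" "1 \<le> n"
  shows "card {U \<in> Wset n s. n \<in> U} = ((n-1) choose (2*s - 1)) + ((n-1) choose (2*s - 2))"
proof -
  let ?V = "{V. V \<subseteq> {1..n-1} \<and> (card V + 2) div 2 = s}"
  have e: "{U \<in> Wset n s. n \<in> U} = insert n ` ?V"
  proof
    show "{U \<in> Wset n s. n \<in> U} \<subseteq> insert n ` ?V"
    proof
      fix U assume U: "U \<in> {U \<in> Wset n s. n \<in> U}"
      hence U1: "U \<subseteq> {1..n}" "(card U + 1) div 2 = s" "n \<in> U" by (auto simp: Wset_def)
      have fin: "finite U" using U1(1) by (rule finite_subset) simp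
      have "U - {n} \<subseteq> {1..n-1}" using U1 by auto
      moreover have "card (U - {n}) + 1 = card U" using fin U1(3)
        by (metis Suc_eq_plus1 card_Suc_Diff1)
      ultimately have "U - {n} \<in> ?V" using U1(2) by auto
      moreover have "U = insert n (U - {n})" using U1(3) by auto
      ultimately show "U \<in> insert n ` ?V" by blast
    qed
  next
    show "insert n ` ?V \<subseteq> {U \<in> Wset n s. n \<in> U}"
    proof
      fix U assume "U \<in> insert n ` ?V"
      then obtain V where V: "V \<subseteq> {1..n-1}" "(card V + 2) div 2 = s" "U = insert n V" by blast
      have fin: "finite V" using V(1) by (rule finite_subset) simp
      have nV: "n \<notin> V" using V(1) assms by auto
      have "card U = card V + 1" using V(3) fin nV by simp
      moreover have "U \<subseteq> {1..n}" using V(1) V(3) assms by (auto dest!: subsetD)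
      ultimately show "U \<in> {U \<in> Wset n s. n \<in> U}" using V by (auto simp: Wset_def)
    qed
  qed
  have inj: "inj_on (insert n) ?V"
  proof (rule inj_onI)
    fix X Y assume "X \<in> ?V" "Y \<in> ?V" "insert n X = insert n Y"
    moreover have "n \<notin> X" "n \<notin> Y" using \<open>X \<in> ?V\<close> \<open>Y \<in> ?V\<close> assms by auto
    ultimately show "X = Y" by (metis insert_ident)
  qed
  have e2: "?V = {U. U \<subseteq> {1..n-1} \<and> card U = 2*s - 1} \<union> {U. U \<subseteq> {1..n-1} \<and> card U = 2*s - 2}"
    using assms by auto
  have d: "{U. U \<subseteq> {1..n-1} \<and> card U = 2*s - 1} \<inter> {U. U \<subseteq> {1..n-1} \<and> card U = 2*s - 2} = {}"
    using assms by auto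
  have f: "finite {U. U \<subseteq> {1..n-1} \<and> card U = k}" for k
    by (rule finite_subset[of _ "Pow {1..n-1}"]) auto
  have "card ?V = ((n-1) choose (2*s - 1)) + ((n-1) choose (2*s - 2))" unfolding e2
    by (subst card_Un_disjoint[OF f f d]) (simp add: n_subsets)
  thus ?thesis unfolding e using card_image[OF inj] by simp
qed



definition Bn :: "nat \<Rightarrow> nat \<times> nat \<Rightarrow> rootvec" where
  "Bn n p = betaC n (fst p) (snd p)"

lemma beta_rle:
  assumes "1 \<le> n" "p \<in> Qs n" "q \<in> Qs n"
  shows "rle n (Bn n p) (Bn n q) \<longleftrightarrow> fst q \<le> fst p \<and> snd q \<le> snd p"
proof
  obtain a b where p: "p = (a,b)" "1 \<le> a" "a \<le> b" "b \<le> n" using assms by (auto simp: Qs_def)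
  obtain c d where q: "q = (c,d)" "1 \<le> c" "c \<le> d" "d \<le> n" using assms by (auto simp: Qs_def)
  assume r: "rle n (Bn n p) (Bn n q)"
  have ra: "Bn n p a \<le> Bn n q a" and rb: "Bn n p b \<le> Bn n q b"
    using r p q unfolding rle_def by auto
  have "c \<le> a"
  proof (rule ccontr)
    assume "\<not> c \<le> a"
    hence "a \<le> n - 1" "a < d" using q p by auto
    thus False using ra p q \<open>\<not> c \<le> a\<close> by (auto simp: Bn_def betaC_def alphaC_def split: if_splits)
  qed
  moreover have "d \<le> b"
  proof (rule ccontr)
    assume "\<not> d \<le> b"
    hence "b < n" using q p by auto
    thus False using rb p q \<open>\<not> d \<le> b\<close> by (auto simp: Bn_def betaC_def alphaC_def split: if_splits)
  qed
  ultimately show "fst q \<le> fst p \<and> snd q \<le> snd p" using p q by simp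
next
  assume le: "fst q \<le> fst p \<and> snd q \<le> snd p"
  obtain a b where p: "p = (a,b)" "1 \<le> a" "a \<le> b" "b \<le> n" using assms by (auto simp: Qs_def)
  obtain c d where q: "q = (c,d)" "1 \<le> c" "c \<le> d" "d \<le> n" using assms by (auto simp: Qs_def)
  show "rle n (Bn n p) (Bn n q)"
    using le p q unfolding rle_def by (auto simp: Bn_def betaC_def alphaC_def)
qed

lemma rle_refl: "rle n x x" by (simp add: rle_def)

lemma Bn_inj: assumes "1 \<le> n" shows "inj_on (Bn n) (Qs n)"
proof (rule inj_onI)
  fix p q assume pq: "p \<in> Qs n" "q \<in> Qs n" "Bn n p = Bn n q"
  have "fst q \<le> fst p \<and> snd q \<le> snd p" using beta_rle[OF assms pq(1,2)] pq(3) rle_refl by metis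
  moreover have "fst p \<le> fst q \<and> snd p \<le> snd q" using beta_rle[OF assms pq(2,1)] pq(3) rle_refl by metis
  ultimately show "p = q" by (simp add: prod_eq_iff)
qed

lemma alpha_eq: assumes "l \<le> n" "1 \<le> n" shows "alphaC l n = betaC n l n"
  using assms by (auto simp: alphaC_def betaC_def fun_eq_iff)

lemma Bn_pos: assumes "1 \<le> n" "p \<in> Qs n" shows "Bn n p \<in> posrootsC n"
proof -
  obtain a b where p: "p = (a,b)" "1 \<le> a" "a \<le> b" "b \<le> n" using assms by (auto simp: Qs_def)
  show ?thesis
  proof (cases "b = n")
    case True
    hence "Bn n p = alphaC a n" using p alpha_eq[of a n] assms by (simp add: Bn_def)
    moreover have "a \<le> n" using p by simp
    hence "alphaC a n \<in> {alphaC i j |i j. 1 \<le> i \<and> i \<le> j \<and> j \<le> n}" using p by blast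
    ultimately show ?thesis unfolding posrootsC_def by simp
  next
    case False
    hence "Bn n p = betaC n a b" "b \<le> n - 1" using p by (auto simp: Bn_def)
    moreover have "betaC n a b \<in> {betaC n k l |k l. 1 \<le> k \<and> k \<le> l \<and> l \<le> n - 1}" using p calculation(2) by auto
    ultimately show ?thesis unfolding posrootsC_def by simp
  qed
qed

lemma pos_cases:
  assumes "1 \<le> n" "x \<in> posrootsC n"
  shows "x \<in> Bn n ` Qs n \<or> (\<exists>i j. 1 \<le> i \<and> i \<le> j \<and> j < n \<and> x = alphaC i j)"
proof -
  from assms(2) consider i j where "1 \<le> i" "i \<le> j" "j \<le> n" "x = alphaC i j"
    | k l where "1 \<le> k" "k \<le> l" "l \<le> n - 1" "x = betaC n k l"
    unfolding posrootsC_def by blast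
  thus ?thesis
  proof cases
    case 1
    show ?thesis
    proof (cases "j = n")
      case True
      hence "x = Bn n (i, n)" "(i,n) \<in> Qs n" using 1 alpha_eq[of i n] assms by (auto simp: Bn_def Qs_def)
      thus ?thesis by blast
    next
      case False
      hence "j < n" using 1 by simp
      thus ?thesis using 1 by blast
    qed
  next
    case 2
    hence "x = Bn n (k, l)" "(k,l) \<in> Qs n" by (auto simp: Bn_def Qs_def)
    thus ?thesis by blast
  qed
qed

lemma roots_le1: assumes "x \<in> rootsC n" shows "x n \<le> 1"
proof -
  have pos: "y n \<le> 1 \<and> 0 \<le> y n" if "y \<in> posrootsC n" for y
    using that unfolding posrootsC_def by (auto simp: alphaC_def betaC_def)
  show ?thesis using assms unfolding rootsC_def using pos by fastforce
qed

lemma Bn_n: assumes "1 \<le> n" "p \<in> Qs n" shows "Bn n p n = 1"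
  using assms by (auto simp: Bn_def betaC_def alphaC_def Qs_def)

lemma abelian_Q: assumes "1 \<le> n" "A \<subseteq> Bn n ` Qs n" shows "abelianC n A"
proof -
  have ge: "1 \<le> x n" if "x \<in> PhiC n A" for x
  proof -
    have "x \<in> posrootsC n \<and> (\<exists>b\<in>A. rle n b x)" using that by (simp add: PhiC_def)
    then obtain b where b: "b \<in> A" "rle n b x" by blast
    obtain p where p: "p \<in> Qs n" "b = Bn n p" using b(1) assms(2) by blast
    have "b n \<le> x n" using b(2) assms(1) by (auto simp: rle_def)
    thus ?thesis using Bn_n[OF assms(1) p(1)] p(2) by simp
  qed
  show ?thesis unfolding abelianC_def
  proof (intro ballI notI)
    fix b1 b2 assume "b1 \<in> PhiC n A" "b2 \<in> PhiC n A" "(\<lambda>m. b1 m + b2 m) \<in> rootsC n"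
    hence "1 \<le> b1 n" "1 \<le> b2 n" "b1 n + b2 n \<le> 1" using ge roots_le1[of "\<lambda>m. b1 m + b2 m" n] by auto
    thus False by simp
  qed
qed

lemma not_abelian:
  assumes "1 \<le> i" "i \<le> j" "j < n" "alphaC i j \<in> A" "A \<subseteq> posrootsC n" "abelianC n A"
  shows False
proof -
  have n1: "1 \<le> n" using assms by auto
  let ?y = "Bn n (i, Suc j)"
  have yQ: "(i, Suc j) \<in> Qs n" using assms by (auto simp: Qs_def)
  have ypos: "?y \<in> posrootsC n" by (rule Bn_pos[OF n1 yQ])
  have "rle n (alphaC i j) ?y" using assms unfolding rle_def by (auto simp: Bn_def betaC_def alphaC_def)
  hence y: "?y \<in> PhiC n A" using ypos assms(4) by (auto simp: PhiC_def)
  have x: "alphaC i j \<in> PhiC n A" using assms(4,5) rle_refl by (auto simp: PhiC_def)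
  have "(\<lambda>m. alphaC i j m + ?y m) = betaC n i i"
    using assms by (auto simp: Bn_def betaC_def alphaC_def fun_eq_iff)
  moreover have "i \<le> n - 1" using assms by simp
  hence "betaC n i i \<in> posrootsC n" using assms unfolding posrootsC_def by blast
  hence "betaC n i i \<in> rootsC n" unfolding rootsC_def by blast
  ultimately show False using assms(6) x y unfolding abelianC_def by metis
qed

lemma AbC_eq: assumes "2 \<le> n" shows "AbC n s = image (Bn n) ` pacs n s"
proof
  have n1: "1 \<le> n" using assms by simp
  show "AbC n s \<subseteq> image (Bn n) ` pacs n s"
  proof
    fix A assume "A \<in> AbC n s"
    hence ac: "antichainC n A" and ab: "abelianC n A" and cA: "card A = s" by (auto simp: AbC_def)
    have sub: "A \<subseteq> posrootsC n" using ac by (simp add: antichainC_def)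
    have AQ: "A \<subseteq> Bn n ` Qs n"
    proof
      fix x assume "x \<in> A"
      show "x \<in> Bn n ` Qs n"
        using pos_cases[OF n1 subsetD[OF sub \<open>x\<in>A\<close>]] not_abelian[OF _ _ _ _ sub ab] \<open>x\<in>A\<close> by blast
    qed
    define S where "S = {p \<in> Qs n. Bn n p \<in> A}"
    have SQ: "S \<subseteq> Qs n" by (auto simp: S_def)
    have AS: "A = Bn n ` S" using AQ by (auto simp: S_def)
    have injS: "inj_on (Bn n) S" using Bn_inj[OF n1] SQ by (rule inj_on_subset)
    have "card S = s" using cA AS card_image[OF injS] by simp
    moreover have "pac S"
      unfolding pac_def
    proof (intro ballI impI notI)
      fix p q assume pq: "p \<in> S" "q \<in> S" "p \<noteq> q" "fst q \<le> fst p \<and> snd q \<le> snd p"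
      have "rle n (Bn n p) (Bn n q)" using beta_rle[OF n1] pq SQ by blast
      moreover have "Bn n p \<noteq> Bn n q" using injS pq by (metis inj_onD)
      moreover have "Bn n p \<in> A" "Bn n q \<in> A" using pq by (auto simp: S_def)
      ultimately show False using ac unfolding antichainC_def by blast
    qed
    ultimately have "S \<in> pacs n s" using SQ by (simp add: pacs_def)
    thus "A \<in> image (Bn n) ` pacs n s" using AS by blast
  qed
next
  have n1: "1 \<le> n" using assms by simp
  show "image (Bn n) ` pacs n s \<subseteq> AbC n s"
  proof
    fix A assume "A \<in> image (Bn n) ` pacs n s"
    then obtain S where S: "S \<in> pacs n s" "A = Bn n ` S" by blast
    have SQ: "S \<subseteq> Qs n" and pS: "pac S" and cS: "card S = s" using S(1) by (auto simp: pacs_def)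
    have injS: "inj_on (Bn n) S" using Bn_inj[OF n1] SQ by (rule inj_on_subset)
    have "card A = s" using S(2) cS card_image[OF injS] by simp
    moreover have "abelianC n A" using abelian_Q[OF n1] S(2) SQ by blast
    moreover have "antichainC n A"
      unfolding antichainC_def
    proof (intro conjI ballI impI)
      show "A \<subseteq> posrootsC n" using S(2) SQ Bn_pos[OF n1] by blast
    next
      fix a b assume ab: "a \<in> A" "b \<in> A" "a \<noteq> b"
      then obtain p q where pq: "p \<in> S" "q \<in> S" "a = Bn n p" "b = Bn n q" using S(2) by blast
      hence "p \<noteq> q" using ab by blast
      hence "\<not> (fst q \<le> fst p \<and> snd q \<le> snd p)" using pS pq unfolding pac_def by blast
      thus "\<not> rle n a b" using beta_rle[OF n1] pq SQ by blast
    qed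
    ultimately show "A \<in> AbC n s" by (simp add: AbC_def)
  qed
qed



lemma pacs_sub: "pacs N s \<subseteq> Pow (Qs N)" by (auto simp: pacs_def)

lemma Qs_mono: "N \<le> M \<Longrightarrow> Qs N \<subseteq> Qs M" by (auto simp: Qs_def)

lemma pacs_lower: assumes "1 \<le> n" shows "pacs (n-1) s = {S \<in> pacs n s. n \<notin> Dset S}"
proof
  show "pacs (n-1) s \<subseteq> {S \<in> pacs n s. n \<notin> Dset S}"
    using assms by (auto simp: pacs_def Qs_def Dset_def)
next
  show "{S \<in> pacs n s. n \<notin> Dset S} \<subseteq> pacs (n-1) s"
  proof
    fix S assume S: "S \<in> {S \<in> pacs n s. n \<notin> Dset S}"
    have "S \<subseteq> Qs (n-1)"
    proof
      fix p assume "p \<in> S"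
      hence "p \<in> Qs n" "snd p \<noteq> n" using S by (auto simp: pacs_def Dset_def)
      thus "p \<in> Qs (n-1)" by (auto simp: Qs_def)
    qed
    thus "S \<in> pacs (n-1) s" using S by (auto simp: pacs_def)
  qed
qed

lemma A1_eq: "A1C n s = image (Bn n) ` pacs (n-1) s"
proof -
  have "A1C n s = {image (Bn n) ((\<lambda>k. (i k, j k)) ` {1..s}) | i j. adm (n-1) s i j}"
    unfolding A1C_def admissible_def adm_def by (simp add: image_image Bn_def)
  also have "\<dots> = image (Bn n) ` pacs (n-1) s"
  proof (rule set_eqI)
    fix x show "x \<in> {image (Bn n) ((\<lambda>k. (i k, j k)) ` {1..s}) | i j. adm (n-1) s i j} \<longleftrightarrow> x \<in> image (Bn n) ` pacs (n-1) s"
    proof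
      assume "x \<in> {image (Bn n) ((\<lambda>k. (i k, j k)) ` {1..s}) | i j. adm (n-1) s i j}"
      then obtain i j where "x = image (Bn n) ((\<lambda>k. (i k, j k)) ` {1..s})" "adm (n-1) s i j" by blast
      thus "x \<in> image (Bn n) ` pacs (n-1) s" using adm_pacs by blast
    next
      assume "x \<in> image (Bn n) ` pacs (n-1) s"
      then obtain S where S: "S \<in> pacs (n-1) s" "x = Bn n ` S" by blast
      obtain i j where "adm (n-1) s i j" "S = (\<lambda>k. (i k, j k)) ` {1..s}" using pacs_adm[OF S(1)] by blast
      thus "x \<in> {image (Bn n) ((\<lambda>k. (i k, j k)) ` {1..s}) | i j. adm (n-1) s i j}" using S(2) by blast
    qed
  qed
  finally show ?thesis .
qed

lemma Icc_split: assumes "1 \<le> (s::nat)" shows "{1..s} = insert 1 (Suc ` {1..s-1})"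
proof
  show "{1..s} \<subseteq> insert 1 (Suc ` {1..s-1})"
  proof
    fix x assume x: "x \<in> {1..s}"
    show "x \<in> insert 1 (Suc ` {1..s-1})"
    proof (cases "x = 1")
      case False
      hence "x - 1 \<in> {1..s-1}" "x = Suc (x - 1)" using x by auto
      thus ?thesis by blast
    qed simp
  qed
qed (use assms in auto)

lemma A2_pairs:
  assumes "2 \<le> n" "1 \<le> s"
  shows "S \<in> pacs n s \<and> n \<in> Dset S \<longleftrightarrow>
    (\<exists>l i j. adm (n-1) (s-1) i j \<and> 1 \<le> l \<and> l \<le> n \<and> (2 \<le> s \<longrightarrow> l < i 1)
        \<and> S = insert (l,n) ((\<lambda>k. (i k, j k)) ` {1..s-1}))"
proof
  assume "S \<in> pacs n s \<and> n \<in> Dset S"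
  hence S: "S \<in> pacs n s" "n \<in> Dset S" by auto
  obtain i j where ij: "adm n s i j" "S = (\<lambda>k. (i k, j k)) ` {1..s}" using pacs_adm[OF S(1)] by blast
  have A1: "\<And>k k'. k\<in>{1..s} \<Longrightarrow> k'\<in>{1..s} \<Longrightarrow> k < k' \<Longrightarrow> i k < i k' \<and> j k' < j k"
    and A0: "\<And>k. k\<in>{1..s} \<Longrightarrow> 1 \<le> i k \<and> i k \<le> n \<and> 1 \<le> j k \<and> j k \<le> n"
    using ij(1) by (auto simp: adm_def)
  have ile: "\<And>k. k\<in>{1..s} \<Longrightarrow> i k \<le> j k" using adm_le[OF ij(1)] by blast
  obtain k0 where k0: "k0 \<in> {1..s}" "i k0 = n \<or> j k0 = n" using S(2) ij(2) by (auto simp: Dset_def)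
  hence jk0: "j k0 = n" using ile[OF k0(1)] A0[OF k0(1)] by auto
  have "k0 = 1"
  proof (rule ccontr)
    assume "k0 \<noteq> 1"
    hence "j k0 < j 1" using A1[of 1 k0] k0 assms by auto
    thus False using jk0 A0[of 1] assms by auto
  qed
  hence j1: "j 1 = n" using jk0 by simp
  define i' where "i' k = i (Suc k)" for k
  define j' where "j' k = j (Suc k)" for k
  have adm': "adm (n-1) (s-1) i' j'"
    unfolding adm_def
  proof (intro conjI ballI impI)
    fix k assume k: "k \<in> {1..s-1}"
    hence k': "Suc k \<in> {1..s}" "1 < Suc k" by auto
    have "j (Suc k) < j 1" using A1[OF _ k'(1) k'(2)] assms by auto
    thus "1 \<le> i' k" "i' k \<le> n - 1" "1 \<le> j' k" "j' k \<le> n - 1"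
      using A0[OF k'(1)] ile[OF k'(1)] j1 by (auto simp: i'_def j'_def)
  next
    fix k k' assume "k \<in> {1..s-1}" "k' \<in> {1..s-1}" "k < k'"
    thus "i' k < i' k'" "j' k' < j' k" using A1[of "Suc k" "Suc k'"] by (auto simp: i'_def j'_def)
  next
    assume "1 \<le> s - 1"
    thus "i' (s-1) \<le> j' (s-1)" using ij(1) by (auto simp: adm_def i'_def j'_def)
  qed
  have "S = insert (i 1, j 1) ((\<lambda>k. (i (Suc k), j (Suc k))) ` {1..s-1})"
    unfolding ij(2) Icc_split[OF assms(2)] image_insert image_image by (rule refl)
  hence "S = insert (i 1, n) ((\<lambda>k. (i' k, j' k)) ` {1..s-1})" using j1
    by (simp add: i'_def j'_def)
  moreover have "1 \<le> i 1" "i 1 \<le> n" using A0[of 1] assms by auto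
  moreover have "2 \<le> s \<longrightarrow> i 1 < i' 1" using A1[of 1 2] by (auto simp: i'_def numeral_2_eq_2)
  ultimately show "\<exists>l i j. adm (n-1) (s-1) i j \<and> 1 \<le> l \<and> l \<le> n \<and> (2 \<le> s \<longrightarrow> l < i 1)
        \<and> S = insert (l,n) ((\<lambda>k. (i k, j k)) ` {1..s-1})" using adm' by blast
next
  assume "\<exists>l i j. adm (n-1) (s-1) i j \<and> 1 \<le> l \<and> l \<le> n \<and> (2 \<le> s \<longrightarrow> l < i 1)
        \<and> S = insert (l,n) ((\<lambda>k. (i k, j k)) ` {1..s-1})"
  then obtain l i j where lij: "adm (n-1) (s-1) i j" "1 \<le> l" "l \<le> n" "2 \<le> s \<longrightarrow> l < i 1"
    "S = insert (l,n) ((\<lambda>k. (i k, j k)) ` {1..s-1})" by blast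
  define T where "T = (\<lambda>k. (i k, j k)) ` {1..s-1}"
  have T: "T \<in> pacs (n-1) (s-1)" unfolding T_def by (rule adm_pacs[OF lij(1)])
  have TQ: "T \<subseteq> Qs (n-1)" and pT: "pac T" and cT: "card T = s - 1" using T by (auto simp: pacs_def)
  have gt: "l < fst q" "snd q < n" if qT: "q \<in> T" for q
  proof -
    obtain k where k: "k \<in> {1..s-1}" "q = (i k, j k)" using qT T_def by blast
    have "l < i 1" using lij(4) k by auto
    moreover have "i 1 \<le> i k"
    proof (cases "k = 1")
      case False
      hence lt: "1 < k" "1 \<in> {1..s-1}" using k by auto
      have "\<forall>k\<in>{1..s-1}. \<forall>k'\<in>{1..s-1}. k < k' \<longrightarrow> i k < i k'" using lij(1) by (auto simp: adm_def)
      hence "i 1 < i k" using lt k(1) by blast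
      thus ?thesis by simp
    qed simp
    ultimately show "l < fst q" using k by simp
    show "snd q < n" using TQ qT assms by (auto simp: Qs_def)
  qed
  have nT: "(l,n) \<notin> T" using gt by fastforce
  have finT: "finite T" by (rule finite_subset[OF TQ finite_Qs])
  have "S \<subseteq> Qs n" using lij(2,3,5) TQ Qs_mono[of "n-1" n] unfolding T_def[symmetric] by (auto simp: Qs_def)
  moreover have "card S = s" using lij(5) nT finT cT assms unfolding T_def[symmetric] by simp
  moreover have "pac S"
    unfolding pac_def lij(5) T_def[symmetric]
  proof (intro ballI impI)
    fix p q assume pq: "p \<in> insert (l, n) T" "q \<in> insert (l, n) T" "p \<noteq> q"
    show "\<not> (fst q \<le> fst p \<and> snd q \<le> snd p)"
    proof (cases "p = (l,n)")
      case True
      hence "q \<in> T" using pq by auto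
      thus ?thesis using gt[of q] True by auto
    next
      case pF: False
      hence pT': "p \<in> T" using pq by auto
      show ?thesis
      proof (cases "q = (l,n)")
        case True thus ?thesis using gt[OF pT'] by auto
      next
        case False
        hence "q \<in> T" using pq by auto
        thus ?thesis using pT pT' pq(3) unfolding pac_def by blast
      qed
    qed
  qed
  moreover have "n \<in> Dset S" using lij(5) by (auto simp: Dset_def)
  ultimately show "S \<in> pacs n s \<and> n \<in> Dset S" by (simp add: pacs_def)
qed

lemma A2_eq:
  assumes "2 \<le> n" "1 \<le> s"
  shows "A2C n s = image (Bn n) ` {S \<in> pacs n s. n \<in> Dset S}"
proof -
  have e: "insert (alphaC l n) ((\<lambda>k. betaC n (i k) (j k)) ` {1..s - 1})
     = Bn n ` insert (l,n) ((\<lambda>k. (i k, j k)) ` {1..s-1})" if "l \<le> n" for l i j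
    using alpha_eq[of l n] that assms by (simp add: image_image Bn_def)
  have "A2C n s = {Bn n ` insert (l,n) ((\<lambda>k. (i k, j k)) ` {1..s-1}) | l i j.
       adm (n-1) (s-1) i j \<and> 1 \<le> l \<and> l \<le> n \<and> (2 \<le> s \<longrightarrow> l < i 1)}" (is "_ = ?R")
  proof (rule set_eqI)
    fix x
    show "x \<in> A2C n s \<longleftrightarrow> x \<in> ?R"
    proof
      assume "x \<in> A2C n s"
      then obtain l i j where lij: "x = insert (alphaC l n) ((\<lambda>k. betaC n (i k) (j k)) ` {1..s - 1})"
        "admissible n (s - 1) i j" "1 \<le> l" "l \<le> n" "2 \<le> s \<longrightarrow> l < i 1"
        unfolding A2C_def by blast
      have "adm (n-1) (s-1) i j" using lij(2) unfolding admissible_def adm_def .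
      thus "x \<in> ?R" using lij e[OF lij(4)] by blast
    next
      assume "x \<in> ?R"
      then obtain l i j where lij: "x = Bn n ` insert (l,n) ((\<lambda>k. (i k, j k)) ` {1..s-1})"
        "adm (n-1) (s-1) i j" "1 \<le> l" "l \<le> n" "2 \<le> s \<longrightarrow> l < i 1"
        by blast
      have "admissible n (s-1) i j" using lij(2) unfolding admissible_def adm_def .
      thus "x \<in> A2C n s" unfolding A2C_def using lij e[OF lij(4)] by blast
    qed
  qed
  also have "\<dots> = image (Bn n) ` {S \<in> pacs n s. n \<in> Dset S}"
  proof (rule set_eqI)
    fix x show "x \<in> ?R \<longleftrightarrow> x \<in> image (Bn n) ` {S \<in> pacs n s. n \<in> Dset S}"
    proof
      assume "x \<in> ?R"
      then obtain l i j where lij: "x = Bn n ` insert (l,n) ((\<lambda>k. (i k, j k)) ` {1..s-1})"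
        "adm (n-1) (s-1) i j" "1 \<le> l" "l \<le> n" "2 \<le> s \<longrightarrow> l < i 1"
        by blast
      define S where "S = insert (l,n) ((\<lambda>k. (i k, j k)) ` {1..s-1})"
      have "\<exists>l i j. adm (n-1) (s-1) i j \<and> 1 \<le> l \<and> l \<le> n \<and> (2 \<le> s \<longrightarrow> l < i 1)
        \<and> S = insert (l,n) ((\<lambda>k. (i k, j k)) ` {1..s-1})" using lij S_def by blast
      hence "S \<in> {S \<in> pacs n s. n \<in> Dset S}" using A2_pairs[OF assms, of S] by simp
      thus "x \<in> image (Bn n) ` {S \<in> pacs n s. n \<in> Dset S}" using lij(1) S_def by blast
    next
      assume "x \<in> image (Bn n) ` {S \<in> pacs n s. n \<in> Dset S}"
      then obtain S where S: "S \<in> pacs n s" "n \<in> Dset S" "x = Bn n ` S" by blast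
      then obtain l i j where lij: "adm (n-1) (s-1) i j" "1 \<le> l" "l \<le> n" "2 \<le> s \<longrightarrow> l < i 1"
        "S = insert (l,n) ((\<lambda>k. (i k, j k)) ` {1..s-1})" using A2_pairs[OF assms, of S] by blast
      thus "x \<in> ?R" using S(3) by blast
    qed
  qed
  finally show ?thesis .
qed



lemma inj_img: assumes "1 \<le> n" shows "inj_on (image (Bn n)) (Pow (Qs n))"
  by (rule inj_on_image_Pow[OF Bn_inj[OF assms]])

theorem mainTheorem10:
  fixes n :: nat
  assumes "n \<ge> 2"
  shows "(\<forall>s\<ge>1. AbC n s = A1C n s \<union> A2C n s \<and> A1C n s \<inter> A2C n s = {}
            \<and> card (A1C n s) = ((n - 1) choose (2*s)) + ((n - 1) choose (2*s - 1))
            \<and> card (A2C n s) = ((n - 1) choose (2*s - 1)) + ((n - 1) choose (2*s - 2)))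
         \<and> finite {s. AbC n s \<noteq> {}}
         \<and> (\<Sum>s\<in>{s. AbC n s \<noteq> {}}. card (AbC n s)) = 2 ^ n"
proof -
  have n1: "1 \<le> n" using assms by simp
  note inj = inj_img[OF n1]
  have sub1: "pacs (n-1) s \<subseteq> Pow (Qs n)" for s using pacs_sub[of "n-1" s] Qs_mono[of "n-1" n] by auto
  have sub2: "{S \<in> pacs n s. n \<in> Dset S} \<subseteq> Pow (Qs n)" for s using pacs_sub by blast
  have cardAb: "card (AbC n s) = card (Wset n s)" for s
  proof -
    have "card (AbC n s) = card (pacs n s)"
      unfolding AbC_eq[OF assms] by (rule card_image[OF inj_on_subset[OF inj pacs_sub]])
    thus ?thesis using card_pacs by simp
  qed
  have part1: "\<forall>s\<ge>1. AbC n s = A1C n s \<union> A2C n s \<and> A1C n s \<inter> A2C n s = {}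
            \<and> card (A1C n s) = ((n - 1) choose (2*s)) + ((n - 1) choose (2*s - 1))
            \<and> card (A2C n s) = ((n - 1) choose (2*s - 1)) + ((n - 1) choose (2*s - 2))"
  proof (intro allI impI conjI)
    fix s :: nat assume s1: "1 \<le> s"
    have pe: "pacs n s = pacs (n-1) s \<union> {S \<in> pacs n s. n \<in> Dset S}"
      using pacs_lower[OF n1, of s] by blast
    show "AbC n s = A1C n s \<union> A2C n s"
      unfolding AbC_eq[OF assms] A1_eq A2_eq[OF assms s1] by (subst pe) (rule image_Un)
    have "A1C n s \<inter> A2C n s = image (Bn n) ` (pacs (n-1) s \<inter> {S \<in> pacs n s. n \<in> Dset S})"
      unfolding A1_eq A2_eq[OF assms s1] by (rule inj_on_image_Int[OF inj sub1 sub2, symmetric])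
    moreover have "pacs (n-1) s \<inter> {S \<in> pacs n s. n \<in> Dset S} = {}"
      using pacs_lower[OF n1, of s] by blast
    ultimately show "A1C n s \<inter> A2C n s = {}" by simp
    have "card (A1C n s) = card (pacs (n-1) s)"
      unfolding A1_eq by (rule card_image[OF inj_on_subset[OF inj sub1]])
    also have "\<dots> = card (Wset (n-1) s)" by (rule card_pacs)
    also have "\<dots> = ((n - 1) choose (2*s)) + ((n - 1) choose (2*s - 1))" by (rule card_W[OF s1])
    finally show "card (A1C n s) = ((n - 1) choose (2*s)) + ((n - 1) choose (2*s - 1))" .
    have "card (A2C n s) = card {S \<in> pacs n s. n \<in> Dset S}"
      unfolding A2_eq[OF assms s1] by (rule card_image[OF inj_on_subset[OF inj sub2]])
    also have "\<dots> = card {U \<in> Wset n s. n \<in> U}" by (rule card_pacs_P)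
    also have "\<dots> = ((n - 1) choose (2*s - 1)) + ((n - 1) choose (2*s - 2))" by (rule card_W_n[OF s1 n1])
    finally show "card (A2C n s) = ((n - 1) choose (2*s - 1)) + ((n - 1) choose (2*s - 2))" .
  qed
  have finW: "finite (Wset n s)" for s
    by (rule finite_subset[of _ "Pow {1..n}"]) (auto simp: Wset_def)
  have Wempty: "Wset n s = {}" if ns: "n < s" for s
  proof (rule ccontr)
    assume "Wset n s \<noteq> {}"
    then obtain U where U: "U \<subseteq> {1..n}" "(card U + 1) div 2 = s" by (auto simp: Wset_def)
    have "card U \<le> n" using card_mono[OF _ U(1)] by simp
    hence "(card U + 1) div 2 \<le> n" using n1 by presburger
    thus False using U(2) ns by simp
  qed
  have AbW: "AbC n s = {} \<longleftrightarrow> Wset n s = {}" for s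
    unfolding AbC_eq[OF assms] Dset_image[symmetric] by simp
  have Ksub: "{s. AbC n s \<noteq> {}} \<subseteq> {..n}"
    using Wempty AbW by (auto simp: not_le[symmetric])
  have finK: "finite {s. AbC n s \<noteq> {}}" using Ksub finite_subset by blast
  have "(\<Sum>s\<in>{s. AbC n s \<noteq> {}}. card (AbC n s)) = (\<Sum>s\<in>{..n}. card (AbC n s))"
    by (rule sum.mono_neutral_left) (use Ksub in auto)
  also have "\<dots> = (\<Sum>s\<in>{..n}. card (Wset n s))" using cardAb by simp
  also have "\<dots> = card (\<Union>s\<in>{..n}. Wset n s)"
    by (rule card_UN_disjoint[symmetric]) (auto simp: finW Wset_def)
  also have "(\<Union>s\<in>{..n}. Wset n s) = Pow {1..n}"
  proof
    show "(\<Union>s\<in>{..n}. Wset n s) \<subseteq> Pow {1..n}" by (auto simp: Wset_def)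
  next
    show "Pow {1..n} \<subseteq> (\<Union>s\<in>{..n}. Wset n s)"
    proof
      fix U assume "U \<in> Pow {1..n}"
      hence U: "U \<subseteq> {1..n}" by simp
      have "card U \<le> n" using card_mono[OF _ U] by simp
      hence "(card U + 1) div 2 \<le> n" using n1 by presburger
      moreover have "U \<in> Wset n ((card U + 1) div 2)" using U by (simp add: Wset_def)
      ultimately show "U \<in> (\<Union>s\<in>{..n}. Wset n s)" by blast
    qed
  qed
  also have "card (Pow {1..n}) = 2 ^ n" by (simp add: card_Pow)
  finally show ?thesis using part1 finK by blast
qed

end
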